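(* Let $m\ge1$, $n_1=\cdots=n_m=2$, $I=(1,\ldots,1)$, $J=(2,\ldots,2)$ and $c\in\mathbb{C}\setminus\{0\}$. Then $\operatorname{hrank}(\mathcal{E}^{IJ}(c))=2m$, and a Hermitian rank decomposition is $$\mathcal{E}^{IJ}(c)=\frac{1}{2m}\Big([\tilde u_0,u_0,\ldots,u_0]_{\otimes h}+(-1)^m[\tilde u_m,u_m,\ldots,u_m]_{\otimes h}+\sum_{k=1}^{m-1}(-1)^k\big([\tilde u_k,u_k,\ldots,u_k]_{\otimes h}+[\tilde v_k,\overline{u_k},\ldots,\overline{u_k}]_{\otimes h}\big)\Big),$$ where $u_k=(1,e^{k\pi\sqrt{-1}/m})$, $\tilde u_k=(c,e^{k\pi\sqrt{-1}/m})$, $\tilde v_k=(c,e^{-k\pi\sqrt{-1}/m})$ for $k=0,\ldots,m$.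
   Context: $\mathbb{C}^{[2,\ldots,2]}$ ($m$ copies) is the real vector space of tensors $\mathcal{H}\in\mathbb{C}^{2\times\cdots\times2}$ of order $2m$ with $\mathcal{H}_{i_1\ldots i_m j_1\ldots j_m}=\overline{\mathcal{H}_{j_1\ldots j_m i_1\ldots i_m}}$. For $v_i\in\mathbb{C}^2$, $[v_1,\ldots,v_m]_{\otimes h}:=v_1\otimes\cdots\otimes v_m\otimes\overline{v_1}\otimes\cdots\otimes\overline{v_m}$. $\operatorname{hrank}(\mathcal{H})$ is the smallest $r$ such that $\mathcal{H}=\sum_{i=1}^r\lambda_i[u_i^1,\ldots,u_i^m]_{\otimes h}$ with $\lambda_i\in\mathbb{R}$, $u_i^j\in\mathbb{C}^2$. $\mathcal{E}^{IJ}(c)$ is the Hermitian tensor whose entry at $(I,J)=(1,\ldots,1,2,\ldots,2)$ is $c$, whose entry at $(J,I)$ is $\overline{c}$, and all other entries are zero. *)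

theory Defs
  imports "HOL-Analysis.Analysis"
begin

text \<open>A tensor of order 2m with all dimensions 2 is a function from index lists
  (over the two-element type 2) to complex; only lists of length 2m carry
  entries, all other values are zero.\<close>

type_synonym tensor = "2 list \<Rightarrow> complex"

definition vec2 :: "complex \<Rightarrow> complex \<Rightarrow> complex^2" where
  "vec2 a b = (\<chi> i. if i = 1 then a else b)"

definition cvec :: "complex^2 \<Rightarrow> complex^2" where
  "cvec v = (\<chi> i. cnj (v $ i))"

definition hprod :: "(complex^2) list \<Rightarrow> tensor" where
  "hprod vs = (\<lambda>is. if length is = 2 * length vs
      then (\<Prod>k<length vs. (vs ! k) $ (is ! k))
         * (\<Prod>k<length vs. cnj ((vs ! k) $ (is ! (length vs + k))))
      else 0)"

definition hrank :: "nat \<Rightarrow> tensor \<Rightarrow> nat" where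
  "hrank m H = (LEAST r. \<exists>(lam::nat \<Rightarrow> real) (us :: nat \<Rightarrow> (complex^2) list).
      (\<forall>i<r. length (us i) = m) \<and>
      H = (\<lambda>is. \<Sum>i<r. complex_of_real (lam i) * hprod (us i) is))"

definition EIJ :: "nat \<Rightarrow> complex \<Rightarrow> tensor" where
  "EIJ m c = (\<lambda>is. if is = replicate m 1 @ replicate m 2 then c
      else if is = replicate m 2 @ replicate m 1 then cnj c else 0)"

end

theory Submission
  imports Defs
begin


lemma one_ne_two2[simp]: "(1::2) \<noteq> 2" by simp
lemma two_ne_one2[simp]: "(2::2) \<noteq> 1" by simp
lemma not1_iff: "(x::2) \<noteq> 1 \<longleftrightarrow> x = 2" using exhaust_2[of x] by auto

lemma hprod_app:
  assumes "length vs = m" "length xs = m" "length ys = m"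
  shows "hprod vs (xs @ ys) = (\<Prod>k<m. (vs ! k) $ (xs ! k)) * (\<Prod>k<m. cnj ((vs ! k) $ (ys ! k)))"
  using assms by (simp add: hprod_def nth_append)

lemma hprod_Cons:
  assumes "length vs = m" "length xs = m" "length ys = m"
  shows "hprod (v # vs) ((x # xs) @ (y # ys)) = v $ x * cnj (v $ y) * hprod vs (xs @ ys)"
proof -
  have "hprod (v # vs) ((x # xs) @ (y # ys)) =
     (\<Prod>k<Suc m. ((v#vs) ! k) $ ((x#xs) ! k)) * (\<Prod>k<Suc m. cnj (((v#vs) ! k) $ ((y#ys) ! k)))"
    by (rule hprod_app) (use assms in auto)
  also have "\<dots> = v $ x * cnj (v $ y) * ((\<Prod>k<m. (vs ! k) $ (xs ! k)) * (\<Prod>k<m. cnj ((vs ! k) $ (ys ! k))))"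
    unfolding prod.lessThan_Suc_shift by simp
  also have "\<dots> = v $ x * cnj (v $ y) * hprod vs (xs @ ys)"
    using hprod_app[OF assms] by simp
  finally show ?thesis .
qed

definition Qf :: "real \<Rightarrow> complex \<Rightarrow> real \<Rightarrow> complex^2 \<Rightarrow> complex" where
  "Qf a b d v = of_real a * (v$1 * cnj (v$1)) + b * v$1 * cnj (v$2) + cnj b * v$2 * cnj (v$1)
     + of_real d * (v$2 * cnj (v$2))"

lemma Qf_eq: "Qf a b d v = of_real (a * (cmod (v$1))^2 + d * (cmod (v$2))^2 + 2 * Re (b * v$1 * cnj (v$2)))"
proof -
  have e: "cnj b * v$2 * cnj (v$1) = cnj (b * v$1 * cnj (v$2))" by simp
  have "Qf a b d v = of_real a * of_real ((cmod (v$1))^2) + (b * v$1 * cnj (v$2) + cnj (b * v$1 * cnj (v$2)))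
     + of_real d * of_real ((cmod (v$2))^2)"
    unfolding Qf_def e complex_norm_square by (simp only: add.assoc)
  also have "\<dots> = of_real (a * (cmod (v$1))^2 + d * (cmod (v$2))^2 + 2 * Re (b * v$1 * cnj (v$2)))"
    unfolding complex_add_cnj by simp
  finally show ?thesis .
qed

lemma Qf_real: "Qf a b d v = of_real (Re (Qf a b d v))"
  by (subst (2) Qf_eq) (simp add: Qf_eq)

definition Ct :: "real \<Rightarrow> complex \<Rightarrow> real \<Rightarrow> nat \<Rightarrow> tensor \<Rightarrow> tensor" where
  "Ct a b d m H = (\<lambda>is. if length is = 2*m then
     of_real a * H ((1 # take m is) @ (1 # drop m is)) + b * H ((1 # take m is) @ (2 # drop m is))
   + cnj b * H ((2 # take m is) @ (1 # drop m is)) + of_real d * H ((2 # take m is) @ (2 # drop m is))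
   else 0)"

lemma Ct_hprod:
  assumes "length vs = m"
  shows "Ct a b d m (hprod (v # vs)) is = Qf a b d v * hprod vs is"
proof (cases "length is = 2*m")
  case True
  then have l: "length (take m is) = m" "length (drop m is) = m" by auto
  define xs where "xs = take m is"
  define ys where "ys = drop m is"
  have l: "length xs = m" "length ys = m" using True by (auto simp: xs_def ys_def)
  have is_eq: "is = xs @ ys" by (simp add: xs_def ys_def)
  have "Ct a b d m (hprod (v # vs)) is =
     of_real a * hprod (v # vs) ((1 # xs) @ (1 # ys)) + b * hprod (v # vs) ((1 # xs) @ (2 # ys))
   + cnj b * hprod (v # vs) ((2 # xs) @ (1 # ys)) + of_real d * hprod (v # vs) ((2 # xs) @ (2 # ys))"
    using True by (simp add: Ct_def xs_def ys_def)
  also have "\<dots> = Qf a b d v * hprod vs (xs @ ys)"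
    unfolding hprod_Cons[OF assms l] Qf_def by (simp add: algebra_simps)
  finally show ?thesis using is_eq by simp
next
  case False
  then show ?thesis using assms by (simp add: Ct_def hprod_def)
qed

lemma Ct_sum: "Ct a b d m (\<lambda>is. \<Sum>i<r. f i * H i is) is = (\<Sum>i<r. f i * Ct a b d m (H i) is)"
proof (cases "length is = 2*m")
  case True
  define A where "A = (1 # take m is) @ (1 # drop m is)"
  define B where "B = (1 # take m is) @ (2 # drop m is)"
  define C where "C = (2 # take m is) @ (1 # drop m is)"
  define D where "D = (2 # take m is) @ (2 # drop m is)"
  have "Ct a b d m (\<lambda>is. \<Sum>i<r. f i * H i is) is =
    of_real a * (\<Sum>i<r. f i * H i A) + b * (\<Sum>i<r. f i * H i B) + cnj b * (\<Sum>i<r. f i * H i C)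
    + of_real d * (\<Sum>i<r. f i * H i D)"
    using True unfolding Ct_def A_def B_def C_def D_def by simp
  also have "\<dots> = (\<Sum>i<r. of_real a * (f i * H i A) + b * (f i * H i B) + cnj b * (f i * H i C)
    + of_real d * (f i * H i D))"
    by (simp add: sum_distrib_left sum.distrib)
  also have "\<dots> = (\<Sum>i<r. f i * Ct a b d m (H i) is)"
    by (rule sum.cong) (simp_all add: Ct_def True A_def B_def C_def D_def algebra_simps)
  finally show ?thesis .
next
  case False
  then show ?thesis by (simp add: Ct_def)
qed

lemma Ct_E:
  assumes "m \<ge> 1"
  shows "Ct a b d m (EIJ (Suc m) c) is = EIJ m (b * c) is"
proof (cases "length is = 2*m")
  case True
  define xs where "xs = take m is"
  define ys where "ys = drop m is"
  have l: "length xs = m" "length ys = m" using True by (auto simp: xs_def ys_def)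
  have is_eq: "is = xs @ ys" by (simp add: xs_def ys_def)
  have ne: "replicate m (1::2) \<noteq> replicate m 2" using assms
    by (cases m) auto
  have "Ct a b d m (EIJ (Suc m) c) is =
     of_real a * EIJ (Suc m) c ((1 # xs) @ (1 # ys)) + b * EIJ (Suc m) c ((1 # xs) @ (2 # ys))
   + cnj b * EIJ (Suc m) c ((2 # xs) @ (1 # ys)) + of_real d * EIJ (Suc m) c ((2 # xs) @ (2 # ys))"
    using True by (simp add: Ct_def xs_def ys_def)
  also have "\<dots> = EIJ m (b * c) is"
  proof -
    have r: "replicate (Suc m) x = x # replicate m x" for x :: 2 by simp
    have e1: "EIJ (Suc m) c ((1 # xs) @ (1 # ys)) = 0"
      unfolding EIJ_def r using l by (simp add: append_eq_append_conv)
    have e2: "EIJ (Suc m) c ((1 # xs) @ (2 # ys)) = (if xs = replicate m 1 \<and> ys = replicate m 2 then c else 0)"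
      unfolding EIJ_def r using l by (simp add: append_eq_append_conv)
    have e3: "EIJ (Suc m) c ((2 # xs) @ (1 # ys)) = (if xs = replicate m 2 \<and> ys = replicate m 1 then cnj c else 0)"
      unfolding EIJ_def r using l by (simp add: append_eq_append_conv)
    have e4: "EIJ (Suc m) c ((2 # xs) @ (2 # ys)) = 0"
      unfolding EIJ_def r using l by (simp add: append_eq_append_conv)
    have e5: "EIJ m (b * c) is = (if xs = replicate m 1 \<and> ys = replicate m 2 then b * c
        else if xs = replicate m 2 \<and> ys = replicate m 1 then cnj (b * c) else 0)"
      unfolding EIJ_def is_eq using l by (simp add: append_eq_append_conv)
    show ?thesis unfolding e1 e2 e3 e4 e5 using ne by auto
  qed
  finally show ?thesis .
next
  case False
  then show ?thesis by (auto simp: Ct_def EIJ_def)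
qed


lemma L_exists: "\<exists>a b d. b \<noteq> 0 \<and> Qf a b d p = 0 \<and> Qf a b d q = 0"
proof -
  define A where "A = (cmod (p$1))^2"
  define B where "B = (cmod (p$2))^2"
  define C where "C = (cmod (q$1))^2"
  define D where "D = (cmod (q$2))^2"
  define P where "P = p$1 * cnj (p$2)"
  define Q where "Q = q$1 * cnj (q$2)"
  have Qp: "Qf a b d p = of_real (a*A + d*B + 2*Re(b*P))" for a b d
    unfolding Qf_eq A_def B_def P_def by (simp add: mult.assoc)
  have Qq: "Qf a b d q = of_real (a*C + d*D + 2*Re(b*Q))" for a b d
    unfolding Qf_eq C_def D_def Q_def by (simp add: mult.assoc)
  show ?thesis
  proof (cases "of_real A * Q = of_real C * P")
    case False
    have A0: "A \<noteq> 0"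
    proof
      assume "A = 0"
      then have "p$1 = 0" by (simp add: A_def)
      then have "P = 0" by (simp add: P_def)
      with False \<open>A = 0\<close> show False by simp
    qed
    define X where "X = of_real C * P - of_real A * Q"
    define bb where "bb = \<i> * cnj X"
    have X0: "X \<noteq> 0" using False by (simp add: X_def)
    have bb0: "bb \<noteq> 0" using X0 by (simp add: bb_def)
    have "bb * X = \<i> * of_real ((cmod X)^2)"
      unfolding bb_def complex_norm_square by (simp only: mult_ac)
    then have "Re (bb * X) = 0" by simp
    then have key: "C * Re (bb * P) = A * Re (bb * Q)"
      by (simp add: X_def right_diff_distrib mult.left_commute[of bb])
    define aa where "aa = -2 * Re (bb*P) / A"
    have "aa * A + 0 * B + 2 * Re (bb * P) = 0" using A0 by (simp add: aa_def)
    moreover have "aa * C + 0 * D + 2 * Re (bb * Q) = 0"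
    proof -
      have "aa * C = -2 * (C * Re (bb*P)) / A" unfolding aa_def by (simp only: times_divide_eq_left times_divide_eq_right mult_ac mult_minus_left)
      also have "\<dots> = -2 * Re (bb * Q)" unfolding key using A0 by simp
      finally show ?thesis by simp
    qed
    ultimately show ?thesis using bb0 unfolding Qp Qq by (intro exI[of _ aa] exI[of _ bb] exI[of _ 0]) simp
  next
    case True
    define bb where "bb = (if P \<noteq> 0 then \<i> * cnj P else if Q \<noteq> 0 then \<i> * cnj Q else 1)"
    have bb0: "bb \<noteq> 0" by (simp add: bb_def)
    have bbP: "bb = \<i> * cnj P" if "P \<noteq> 0" using that by (simp add: bb_def)
    have r1: "Re (bb * P) = 0"
    proof (cases "P = 0")
      case False
      have "bb * P = \<i> * of_real ((cmod P)^2)"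
        using False unfolding bbP[OF False] complex_norm_square by (simp only: mult_ac)
      then show ?thesis by simp
    qed (simp)
    have r2: "Re (bb * Q) = 0"
    proof (cases "P = 0")
      case False
      have A0: "A \<noteq> 0"
      proof
        assume "A = 0"
        then have "p$1 = 0" by (simp add: A_def)
        then have "P = 0" by (simp add: P_def)
        with False show False by simp
      qed
      have e: "of_real A * (of_real (C / A) * P) = of_real (A * (C / A)) * P" by (simp only: of_real_mult mult.assoc)
      have "A * (C / A) = C" using A0 by simp
      then have "of_real A * Q = of_real A * (of_real (C / A) * P)" using True e by simp
      then have QQ: "Q = of_real (C / A) * P" using A0 by (subst (asm) mult_cancel_left) simp
      have "bb * Q = \<i> * of_real (C / A * (cmod P)^2)"
        unfolding QQ bbP[OF False] of_real_mult complex_norm_square by (simp only: mult_ac)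
      then show ?thesis by simp
    next
      case Pz: True
      show ?thesis
      proof (cases "Q = 0")
        case False
        have bbQ: "bb = \<i> * cnj Q" using False Pz by (simp add: bb_def)
        have "bb * Q = \<i> * of_real ((cmod Q)^2)"
          unfolding bbQ complex_norm_square by (simp only: mult_ac)
        then show ?thesis by simp
      qed (simp)
    qed
    have "0 * A + 0 * B + 2 * Re (bb * P) = 0" using r1 by simp
    moreover have "0 * C + 0 * D + 2 * Re (bb * Q) = 0" using r2 by simp
    ultimately show ?thesis using bb0 unfolding Qp Qq by (intro exI[of _ 0] exI[of _ bb] exI[of _ 0]) simp
  qed
qed

lemma hprod_rep:
  assumes "length U = m"
  shows "hprod U (replicate m x @ replicate m y) = (\<Prod>k<m. U!k$x) * cnj (\<Prod>k<m. U!k$y)"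
  using assms by (simp add: hprod_app cnj_prod)

lemma rank_ge2:
  fixes r :: nat
  assumes "m \<ge> 1" "c \<noteq> 0" "\<forall>i<r. length (us i) = m"
    and dec: "EIJ m c = (\<lambda>is. \<Sum>i<r. of_real (lam i) * hprod (us i) is)"
  shows "2 \<le> r"
proof (rule ccontr)
  assume "\<not> 2 \<le> r"
  then have r01: "r = 0 \<or> r = 1" by auto
  let ?I = "replicate m (1::2)"
  let ?J = "replicate m (2::2)"
  have ne: "?I \<noteq> ?J" using assms(1) by (cases m) auto
  have E12: "EIJ m c (?I @ ?J) = c" by (simp add: EIJ_def)
  have E11: "EIJ m c (?I @ ?I) = 0" using ne by (simp add: EIJ_def append_eq_append_conv)
  have E22: "EIJ m c (?J @ ?J) = 0" using ne by (simp add: EIJ_def append_eq_append_conv)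
  show False
  proof (cases "r = 0")
    case True
    then show False using E12 dec assms(2) by simp
  next
    case False
    then have r1: "r = 1" using r01 by simp
    define U where "U = us 0"
    have lU: "length U = m" using assms(3) r1 by (simp add: U_def)
    define X where "X = (\<Prod>k<m. U!k$1)"
    define Y where "Y = (\<Prod>k<m. U!k$2)"
    have h: "EIJ m c is = of_real (lam 0) * hprod U is" for "is"
      using dec r1 by (simp add: U_def)
    have a1: "of_real (lam 0) * (X * cnj X) = 0" using h[of "?I @ ?I"] E11 hprod_rep[OF lU] by (simp add: X_def)
    have a2: "of_real (lam 0) * (Y * cnj Y) = 0" using h[of "?J @ ?J"] E22 hprod_rep[OF lU] by (simp add: Y_def)
    have a3: "of_real (lam 0) * (X * cnj Y) = c" using h[of "?I @ ?J"] E12 hprod_rep[OF lU] by (simp add: X_def Y_def)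
    show False using a1 a2 a3 assms(2) by auto
  qed
qed

lemma LB:
  assumes "m \<ge> 1"
  shows "c \<noteq> 0 \<Longrightarrow> (\<forall>i<r. length (us i) = m) \<Longrightarrow>
    EIJ m c = (\<lambda>is. \<Sum>i<r. of_real (lam i) * hprod (us i) is) \<Longrightarrow> 2*m \<le> r"
  using assms
proof (induction m arbitrary: c r lam us rule: nat_induct_at_least)
  case base
  then show ?case using rank_ge2[of 1 c r us lam] by simp
next
  case (Suc m)
  have r2: "2 \<le> r" using rank_ge2[of "Suc m" c r us lam] Suc.prems by simp
  obtain a b d where abd: "b \<noteq> 0" "Qf a b d (hd (us (r-1))) = 0" "Qf a b d (hd (us (r-2))) = 0"
    using L_exists by blast
  define lam' where "lam' i = lam i * Re (Qf a b d (hd (us i)))" for i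
  define us' where "us' i = tl (us i)" for i
  have usi: "us i = hd (us i) # us' i" if "i < r" for i
    using Suc.prems(2) that unfolding us'_def
    by (metis Zero_not_Suc hd_Cons_tl list.size(3))
  have lus': "\<forall>i<r-2. length (us' i) = m" using Suc.prems(2) by (simp add: us'_def)
  have "EIJ m (b * c) is = (\<Sum>i<r-2. of_real (lam' i) * hprod (us' i) is)" for "is"
  proof -
    have "EIJ m (b * c) is = Ct a b d m (EIJ (Suc m) c) is" using Ct_E[OF Suc.hyps] by simp
    also have "\<dots> = (\<Sum>i<r. of_real (lam i) * Ct a b d m (hprod (us i)) is)"
      unfolding Suc.prems(3) by (rule Ct_sum)
    also have "\<dots> = (\<Sum>i<r. of_real (lam' i) * hprod (us' i) is)"
    proof (rule sum.cong)
      fix i assume "i \<in> {..<r}"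
      then have ir: "i < r" by simp
      have l: "length (us' i) = m" using Suc.prems(2) ir by (simp add: us'_def)
      have "Ct a b d m (hprod (us i)) is = Qf a b d (hd (us i)) * hprod (us' i) is"
        using Ct_hprod[OF l] usi[OF ir] by metis
      then show "of_real (lam i) * Ct a b d m (hprod (us i)) is = of_real (lam' i) * hprod (us' i) is"
        by (subst (asm) Qf_real) (simp add: lam'_def)
    qed simp
    also have "\<dots> = (\<Sum>i<r-2. of_real (lam' i) * hprod (us' i) is)"
    proof -
      obtain n where rn: "r = Suc (Suc n)" using r2 by (metis add_2_eq_Suc le_Suc_ex)
      have "lam' n = 0" "lam' (Suc n) = 0" using abd by (simp_all add: lam'_def rn)
      then show ?thesis by (simp add: rn)
    qed
    finally show ?thesis .
  qed
  then have "2*m \<le> r-2"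
    using Suc.IH[of "b*c" "r-2" us' lam'] lus' Suc.prems(1) abd(1) by auto
  then show ?case using r2 by simp
qed



lemma not2_iff: "(x::2) \<noteq> 2 \<longleftrightarrow> x = 1" using exhaust_2[of x] by auto

definition Wl :: "complex \<Rightarrow> nat \<Rightarrow> complex \<Rightarrow> (complex^2) list" where
  "Wl c m z = vec2 c z # replicate (m-1) (vec2 1 z)"

lemma Wl_len: "m \<ge> 1 \<Longrightarrow> length (Wl c m z) = m"
  by (simp add: Wl_def)

lemma vec2_nth: "vec2 a b $ x = (if x = 1 then a else b)"
  by (simp add: vec2_def)

lemma Wl_nth: "m \<ge> 1 \<Longrightarrow> k < m \<Longrightarrow> (Wl c m z ! k) $ x = (if x = 1 then (if k = 0 then c else 1) else z)"
  by (cases k) (auto simp: Wl_def vec2_nth)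

lemma prodW:
  assumes "m \<ge> 1"
  shows "(\<Prod>k<m. (Wl c m z ! k) $ g k) = (if g 0 = 1 then c else 1) * z ^ card {k. k < m \<and> g k \<noteq> 1}"
proof -
  have "(\<Prod>k<m. (Wl c m z ! k) $ g k) = (\<Prod>k<m. if g k = 1 then (if k = 0 then c else 1) else z)"
    by (rule prod.cong) (simp_all add: Wl_nth[OF assms])
  also have "\<dots> = (\<Prod>k\<in>{..<m} \<inter> {k. g k = 1}. (if k = 0 then c else 1)) * (\<Prod>k\<in>{..<m} \<inter> - {k. g k = 1}. z)"
    by (rule prod.If_cases) simp
  also have "(\<Prod>k\<in>{..<m} \<inter> {k. g k = 1}. (if k = 0 then c else 1)) = (if g 0 = 1 then c else 1)"
    using assms by simp
  also have "{..<m} \<inter> - {k. g k = 1} = {k. k < m \<and> g k \<noteq> 1}" by auto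
  finally show ?thesis by simp
qed

definition na :: "nat \<Rightarrow> 2 list \<Rightarrow> nat" where "na m is = card {k. k < m \<and> is ! k \<noteq> 1}"
definition nb :: "nat \<Rightarrow> 2 list \<Rightarrow> nat" where "nb m is = card {k. k < m \<and> is ! (m + k) \<noteq> 1}"

lemma hprod_W:
  assumes "m \<ge> 1" "length is = 2 * m"
  shows "hprod (Wl c m z) is = (if is!0 = 1 then c else 1) * (if is!m = 1 then cnj c else 1) * z ^ na m is * cnj z ^ nb m is"
proof -
  have "hprod (Wl c m z) is = (\<Prod>k<m. (Wl c m z ! k) $ (is ! k)) * cnj (\<Prod>k<m. (Wl c m z ! k) $ (is ! (m + k)))"
    using assms by (simp add: hprod_def Wl_len cnj_prod)
  also have "\<dots> = (if is!0 = 1 then c else 1) * z ^ na m is * cnj ((if is!m = 1 then c else 1) * z ^ nb m is)"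
    unfolding prodW[OF assms(1)] na_def nb_def by simp
  finally show ?thesis by simp
qed

lemma cis_pow_cnj: "cis t ^ a * cnj (cis t) ^ b = cis ((real a - real b) * t)"
  by (simp only: cis_cnj Complex.DeMoivre cis_mult) (simp add: algebra_simps)

lemma minus_one_pow_cis: "(-1::complex) ^ i = cis (real i * pi)"
  using Complex.DeMoivre[of pi i] by (simp add: mult.commute)

lemma card_le_m: "card {k. k < (m::nat) \<and> P k} \<le> m"
proof -
  have "card {k. k < m \<and> P k} \<le> card {..<m}" by (rule card_mono) auto
  then show ?thesis by simp
qed

lemma card_eq_m: "card {k. k < (m::nat) \<and> P k} = m \<longleftrightarrow> (\<forall>k<m. P k)"
proof
  assume h: "card {k. k < m \<and> P k} = m"
  have "{k. k < m \<and> P k} = {..<m}"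
    by (rule card_subset_eq) (use h in auto)
  then show "\<forall>k<m. P k" by auto
next
  assume "\<forall>k<m. P k"
  then have "{k. k < m \<and> P k} = {..<m}" by auto
  then show "card {k. k < m \<and> P k} = m" by simp
qed

lemma card_eq_0: "card {k. k < (m::nat) \<and> P k} = 0 \<longleftrightarrow> (\<forall>k<m. \<not> P k)"
proof -
  have "finite {k. k < m \<and> P k}" by (rule finite_subset[of _ "{..<m}"]) auto
  then show ?thesis by (auto simp: card_eq_0_iff)
qed

lemma w_eq_1:
  assumes "m \<ge> 1" "D \<le> real m" "- real m \<le> D"
  shows "cis ((real m + D) * pi / real m) = 1 \<longleftrightarrow> D = real m \<or> D = - real m"
proof
  assume "cis ((real m + D) * pi / real m) = 1"
  then have "cos ((real m + D) * pi / real m) = 1" by (simp add: complex_eq_iff)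
  then obtain n :: int where n: "(real m + D) * pi / real m = n * 2 * pi"
    by (auto simp: cos_one_2pi_int)
  have mpos: "real m > 0" using assms by simp
  have "(real m + D) * pi = (2 * n * real m) * pi" using n mpos by (simp add: field_simps)
  then have "real m + D = 2 * n * real m" by simp
  then have "0 \<le> 2 * n * real m" "2 * n * real m \<le> 2 * real m" using assms by linarith+
  then have "0 \<le> real_of_int n" "real_of_int n \<le> 1" using mpos
    by (simp_all add: zero_le_mult_iff mult_le_cancel_right1)
  then have "n = 0 \<or> n = 1" by linarith
  then show "D = real m \<or> D = - real m" using \<open>real m + D = 2 * n * real m\<close> by auto
next
  assume "D = real m \<or> D = - real m"
  moreover have "real m \<noteq> 0" using assms by simp
  ultimately show "cis ((real m + D) * pi / real m) = 1"
    by (auto simp: cis_multiple_2pi[of 1, simplified] )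
qed


lemma list_IJ:
  assumes "length is = 2*m"
  shows "(is = replicate m x @ replicate m y) \<longleftrightarrow> (\<forall>k<m. is!k = x) \<and> (\<forall>k<m. is!(m+k) = y)"
proof
  assume "is = replicate m x @ replicate m y"
  then show "(\<forall>k<m. is!k = x) \<and> (\<forall>k<m. is!(m+k) = y)" by (simp add: nth_append)
next
  assume h: "(\<forall>k<m. is!k = x) \<and> (\<forall>k<m. is!(m+k) = y)"
  show "is = replicate m x @ replicate m y"
  proof (rule nth_equalityI)
    show "length is = length (replicate m x @ replicate m y)" using assms by simp
    fix i assume "i < length is"
    then have i: "i < 2*m" using assms by simp
    show "is ! i = (replicate m x @ replicate m y) ! i"
    proof (cases "i < m")
      case True then show ?thesis using h by (simp add: nth_append)
    next
      case False
      then have "is ! i = is ! (m + (i - m))" by simp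
      also have "\<dots> = y"
      proof -
        have "i - m < m" using i False by simp
        then show ?thesis using h by blast
      qed
      finally show ?thesis using False i by (simp add: nth_append)
    qed
  qed
qed

lemma core:
  assumes m1: "m \<ge> 1" and len: "length is = 2*m"
  shows "(\<Sum>i<2*m. (-1)^i * hprod (Wl c m (cis (real i * pi / real m))) is) = of_nat (2*m) * EIJ m c is"
proof -
  define K where "K = (if is!0 = 1 then c else 1) * (if is!m = 1 then cnj c else 1)"
  define D where "D = real (na m is) - real (nb m is)"
  define w where "w = cis ((real m + D) * pi / real m)"
  have mpos: "real m > 0" using m1 by simp
  have trm: "(-1)^i * hprod (Wl c m (cis (real i * pi / real m))) is = K * w^i" for i
  proof -
    have "hprod (Wl c m (cis (real i * pi / real m))) is = K * cis (D * (real i * pi / real m))"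
      unfolding hprod_W[OF m1 len] K_def D_def mult.assoc[symmetric] cis_pow_cnj[symmetric] by simp
    moreover have "(-1::complex)^i * cis (D * (real i * pi / real m)) = w^i"
    proof -
      have "(-1::complex)^i * cis (D * (real i * pi / real m)) = cis (real i * pi + D * (real i * pi / real m))"
        unfolding minus_one_pow_cis cis_mult by simp
      also have "real i * pi + D * (real i * pi / real m) = real i * ((real m + D) * pi / real m)"
        using mpos by (simp add: field_simps)
      finally show ?thesis unfolding w_def Complex.DeMoivre by simp
    qed
    ultimately show ?thesis by (simp add: mult_ac)
  qed
  have w2m: "w ^ (2*m) = 1"
  proof -
    have "w ^ (2*m) = cis (real (2*m) * ((real m + D) * pi / real m))" unfolding w_def Complex.DeMoivre ..
    also have "real (2*m) * ((real m + D) * pi / real m) = 2 * pi * of_int (int m + int (na m is) - int (nb m is))"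
      using mpos by (simp add: D_def field_simps)
    also have "cis \<dots> = 1" by (rule cis_multiple_2pi) simp
    finally show ?thesis .
  qed
  have sum_eq: "(\<Sum>i<2*m. (-1)^i * hprod (Wl c m (cis (real i * pi / real m))) is) = K * (if w = 1 then of_nat (2*m) else 0)"
    unfolding trm sum_distrib_left[symmetric] sum_gp_strict using w2m by simp
  have na_le: "na m is \<le> m" unfolding na_def by (rule card_le_m)
  have nb_le: "nb m is \<le> m" unfolding nb_def by (rule card_le_m)
  have weq: "w = 1 \<longleftrightarrow> D = real m \<or> D = - real m"
    unfolding w_def by (rule w_eq_1) (use m1 na_le nb_le in \<open>auto simp: D_def\<close>)
  have Dm: "D = real m \<longleftrightarrow> na m is = m \<and> nb m is = 0" using na_le nb_le by (auto simp: D_def)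
  have Dmm: "D = - real m \<longleftrightarrow> na m is = 0 \<and> nb m is = m" using na_le nb_le by (auto simp: D_def)
  have IJ: "is = replicate m 1 @ replicate m 2 \<longleftrightarrow> na m is = 0 \<and> nb m is = m"
    unfolding list_IJ[OF len] na_def nb_def card_eq_0 card_eq_m by (simp add: not1_iff not2_iff)
  have JI: "is = replicate m 2 @ replicate m 1 \<longleftrightarrow> na m is = m \<and> nb m is = 0"
    unfolding list_IJ[OF len] na_def nb_def card_eq_0 card_eq_m by (simp add: not1_iff not2_iff)
  have m0: "0 < m" using m1 by simp
  show ?thesis
  proof (cases "is = replicate m 1 @ replicate m 2")
    case True
    then have "K = c" using m0 by (simp add: K_def nth_append)
    moreover have "w = 1" using True IJ Dmm weq by simp
    ultimately show ?thesis using True sum_eq by (simp add: EIJ_def)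
  next
    case F1: False
    show ?thesis
    proof (cases "is = replicate m 2 @ replicate m 1")
      case True
      then have "K = cnj c" using m0 by (simp add: K_def nth_append)
      moreover have "w = 1" using True JI Dm weq by simp
      ultimately show ?thesis using True F1 sum_eq by (simp add: EIJ_def)
    next
      case False
      then have "w \<noteq> 1" using F1 IJ JI Dm Dmm weq by simp
      then show ?thesis using False F1 sum_eq by (simp add: EIJ_def)
    qed
  qed
qed



lemma split2m:
  assumes "m \<ge> (1::nat)"
  shows "(\<Sum>i<2*m. f i) = f 0 + f m + (\<Sum>k = 1..m - 1. f k + f (2*m - k))"
proof -
  have s1: "(\<Sum>i<2*m. f i) = (\<Sum>i\<in>{0..<m}. f i) + (\<Sum>i\<in>{m..<2*m}. f i)"
    by (simp add: lessThan_atLeast0 sum.atLeastLessThan_concat)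
  have s2: "(\<Sum>i\<in>{0..<m}. f i) = f 0 + (\<Sum>i\<in>{1..<m}. f i)"
    using assms by (simp add: sum.atLeast_Suc_lessThan)
  have s3: "(\<Sum>i\<in>{m..<2*m}. f i) = f m + (\<Sum>i\<in>{Suc m..<2*m}. f i)"
    using assms by (simp add: sum.atLeast_Suc_lessThan)
  have s4: "(\<Sum>i\<in>{Suc m..<2*m}. f i) = (\<Sum>k\<in>{1..<m}. f (2*m - k))"
    by (rule sum.reindex_bij_witness[of _ "\<lambda>i. 2*m - i" "\<lambda>k. 2*m - k"]) auto
  have s5: "{1..m - 1} = {1..<m}" using assms by auto
  show ?thesis unfolding s1 s2 s3 s4 s5 sum.distrib by (simp add: algebra_simps)
qed

lemma dec2m:
  assumes m1: "m \<ge> 1"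
  shows "EIJ m c = (\<lambda>is. \<Sum>i<2*m. complex_of_real ((-1)^i / real (2*m)) * hprod (Wl c m (cis (real i * pi / real m))) is)"
proof
  fix "is"
  show "EIJ m c is = (\<Sum>i<2*m. complex_of_real ((-1)^i / real (2*m)) * hprod (Wl c m (cis (real i * pi / real m))) is)"
  proof (cases "length is = 2*m")
    case True
    have "(\<Sum>i<2*m. complex_of_real ((-1)^i / real (2*m)) * hprod (Wl c m (cis (real i * pi / real m))) is)
        = (1 / of_nat (2*m)) * (\<Sum>i<2*m. (-1)^i * hprod (Wl c m (cis (real i * pi / real m))) is)"
      by (simp add: sum_distrib_left)
    also have "\<dots> = EIJ m c is" unfolding core[OF m1 True] using m1 by simp
    finally show ?thesis by simp
  next
    case False
    then have "is \<noteq> replicate m 1 @ replicate m 2" "is \<noteq> replicate m 2 @ replicate m 1" by auto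
    then show ?thesis using m1 False by (simp add: EIJ_def hprod_def Wl_len)
  qed
qed

theorem proposition2p2:
  fixes m :: nat and c :: complex
  assumes "m \<ge> 1" and "c \<noteq> 0"
  defines "u \<equiv> (\<lambda>k::nat. vec2 1 (cis (real k * pi / real m)))"
      and "ut \<equiv> (\<lambda>k::nat. vec2 c (cis (real k * pi / real m)))"
      and "vt \<equiv> (\<lambda>k::nat. vec2 c (cis (- (real k * pi / real m))))"
  shows "hrank m (EIJ m c) = 2 * m \<and>
    EIJ m c = (\<lambda>is. (1 / (2 * of_nat m)) *
      (hprod (ut 0 # replicate (m - 1) (u 0)) is
       + (-1) ^ m * hprod (ut m # replicate (m - 1) (u m)) is
       + (\<Sum>k = 1..m - 1. (-1) ^ k *
           (hprod (ut k # replicate (m - 1) (u k)) is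
            + hprod (vt k # replicate (m - 1) (cvec (u k))) is))))"
proof
  show "hrank m (EIJ m c) = 2 * m"
    unfolding hrank_def
  proof (rule Least_equality)
    show "\<exists>(lam::nat \<Rightarrow> real) (us :: nat \<Rightarrow> (complex^2) list).
      (\<forall>i<2*m. length (us i) = m) \<and>
      EIJ m c = (\<lambda>is. \<Sum>i<2*m. complex_of_real (lam i) * hprod (us i) is)"
      apply (intro exI[of _ "\<lambda>i. (-1)^i / real (2*m)"] exI[of _ "\<lambda>i. Wl c m (cis (real i * pi / real m))"])
      using dec2m[OF assms(1)] Wl_len[OF assms(1)] by simp
  next
    fix r
    assume "\<exists>(lam::nat \<Rightarrow> real) (us :: nat \<Rightarrow> (complex^2) list).
      (\<forall>i<r. length (us i) = m) \<and>
      EIJ m c = (\<lambda>is. \<Sum>i<r. complex_of_real (lam i) * hprod (us i) is)"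
    then obtain lam us where "(\<forall>i<r. length (us i) = m)"
      "EIJ m c = (\<lambda>is. \<Sum>i<r. complex_of_real (lam i) * hprod (us i) is)" by blast
    then show "2 * m \<le> r" using LB[OF assms(1) assms(2)] by blast
  qed
next
  define f where "f is i = (-1)^i * hprod (Wl c m (cis (real i * pi / real m))) is" for "is" i
  have m1: "m \<ge> 1" by (rule assms(1))
  have W1: "ut k # replicate (m - 1) (u k) = Wl c m (cis (real k * pi / real m))" for k
    by (simp add: Wl_def ut_def u_def)
  have cv: "cvec (vec2 1 z) = vec2 1 (cnj z)" for z
    by (simp add: cvec_def vec2_def vec_eq_iff)
  have W2: "vt k # replicate (m - 1) (cvec (u k)) = Wl c m (cis (real (2*m - k) * pi / real m))" if "k \<le> 2*m" for k
  proof -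
    have "real (2*m - k) * pi / real m = 2 * pi + (- (real k * pi / real m))"
      using that m1 by (simp add: field_simps of_nat_diff)
    then have "cis (real (2*m - k) * pi / real m) = cis (2 * pi) * cis (- (real k * pi / real m))"
      by (simp only: cis_mult)
    moreover have "cis (2 * pi) = 1" using cis_multiple_2pi[of 1] by simp
    ultimately have "cis (real (2*m - k) * pi / real m) = cis (- (real k * pi / real m))" by simp
    then show ?thesis by (simp add: Wl_def vt_def u_def cv cis_cnj)
  qed
  have sg: "(-1::complex)^(2*m - k) = (-1)^k" if "k \<le> 2*m" for k
  proof -
    have "even (2*m - k) \<longleftrightarrow> even k" using that by presburger
    then show ?thesis by (simp add: minus_one_power_iff)
  qed
  show "EIJ m c = (\<lambda>is. (1 / (2 * of_nat m)) *
      (hprod (ut 0 # replicate (m - 1) (u 0)) is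
       + (-1) ^ m * hprod (ut m # replicate (m - 1) (u m)) is
       + (\<Sum>k = 1..m - 1. (-1) ^ k *
           (hprod (ut k # replicate (m - 1) (u k)) is
            + hprod (vt k # replicate (m - 1) (cvec (u k))) is))))"
  proof
    fix "is"
    have br: "hprod (ut 0 # replicate (m - 1) (u 0)) is
       + (-1) ^ m * hprod (ut m # replicate (m - 1) (u m)) is
       + (\<Sum>k = 1..m - 1. (-1) ^ k *
           (hprod (ut k # replicate (m - 1) (u k)) is
            + hprod (vt k # replicate (m - 1) (cvec (u k))) is))
       = (\<Sum>i<2*m. f is i)"
    proof -
      have "(\<Sum>k = 1..m - 1. (-1) ^ k *
           (hprod (ut k # replicate (m - 1) (u k)) is
            + hprod (vt k # replicate (m - 1) (cvec (u k))) is))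
          = (\<Sum>k = 1..m - 1. f is k + f is (2*m - k))"
      proof (rule sum.cong)
        fix k assume "k \<in> {1..m-1}"
        then have k: "k \<le> 2*m" by auto
        show "(-1) ^ k * (hprod (ut k # replicate (m - 1) (u k)) is
            + hprod (vt k # replicate (m - 1) (cvec (u k))) is) = f is k + f is (2*m - k)"
          unfolding f_def W1 W2[OF k] sg[OF k] by (simp add: algebra_simps)
      qed simp
      moreover have "hprod (ut 0 # replicate (m - 1) (u 0)) is = f is 0" unfolding f_def W1 by simp
      moreover have "(-1) ^ m * hprod (ut m # replicate (m - 1) (u m)) is = f is m" unfolding f_def W1 by simp
      ultimately show ?thesis using split2m[OF m1, of "f is"] by simp
    qed
    have "EIJ m c is = (\<Sum>i<2*m. complex_of_real ((-1)^i / real (2*m)) * hprod (Wl c m (cis (real i * pi / real m))) is)"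
      by (subst dec2m[OF m1]) simp
    also have "\<dots> = (1 / (2 * of_nat m)) * (\<Sum>i<2*m. f is i)"
      by (simp add: sum_distrib_left f_def)
    finally show "EIJ m c is = (1 / (2 * of_nat m)) *
      (hprod (ut 0 # replicate (m - 1) (u 0)) is
       + (-1) ^ m * hprod (ut m # replicate (m - 1) (u m)) is
       + (\<Sum>k = 1..m - 1. (-1) ^ k *
           (hprod (ut k # replicate (m - 1) (u k)) is
            + hprod (vt k # replicate (m - 1) (cvec (u k))) is)))"
      unfolding br .
  qed
qed

end
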